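(* Under the hypotheses of Lemma 2.2, define $T=P_1\phi(P_1)P_2+P_2\phi(P_2)P_1$ and the additive map $\varphi:\mathcal{U}\to\mathcal{U}$ by $\varphi(U)=\phi(U)-\phi(I)U+[T,U]$. Then (1) $\varphi(P_1)=\varphi(P_2)=0$; and (2) $\varphi$ satisfies $\varphi(U)\circ V+U\circ\varphi(V)=0$ for all $U,V\in\mathcal{U}$ with $UV=VU=0$.
   Context: $\mathcal{U}=\begin{pmatrix}\mathcal{A}&\mathcal{M}\\ \mathcal{N}&\mathcal{B}\end{pmatrix}$ is a generalized matrix ring: $\mathcal{A},\mathcal{B}$ unital 2-torsion free rings, $\mathcal{M}$ a unital $(\mathcal{A},\mathcal{B})$-bimodule faithful on both sides, $\mathcal{N}$ a unital $(\mathcal{B},\mathcal{A})$-bimodule, with bimodule pairings $MN\in\mathcal{A}$, $NM\in\mathcal{B}$ satisfying $(MN)M'=M(NM')$, $(NM)N'=N(MN')$; $\mathcal{U}$ consists of $2\times2$ matrices with usual matrix operations and identity $I$. The hypotheses of Lemma 2.2: $\phi:\mathcal{U}\to\mathcal{U}$ is additive and $\phi(U)\circ V+U\circ\phi(V)=0$ whenever $UV=VU=0$. $X\circ Y=XY+YX$, $[X,Y]=XY-YX$. $P_1=\mathrm{diag}(I_{\mathcal{A}},0)$, $P_2=\mathrm{diag}(0,I_{\mathcal{B}})$. *)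

theory Defs
  imports Main
begin

text \<open>A generalized matrix ring U = [[A, M], [N, B]] (Morita context).
  A :: 'a, B :: 'b are unital rings; M :: 'm, N :: 'n abelian groups;
  the module actions and the pairings are packaged in a record.\<close>

record ('a, 'm, 'n, 'b) morita =
  lmM :: "'a \<Rightarrow> 'm \<Rightarrow> 'm"
  rmM :: "'m \<Rightarrow> 'b \<Rightarrow> 'm"
  lmN :: "'b \<Rightarrow> 'n \<Rightarrow> 'n"
  rmN :: "'n \<Rightarrow> 'a \<Rightarrow> 'n"
  pMN :: "'m \<Rightarrow> 'n \<Rightarrow> 'a"
  pNM :: "'n \<Rightarrow> 'm \<Rightarrow> 'b"

locale gen_matrix_ring =
  fixes R :: "('a::ring_1, 'm::ab_group_add, 'n::ab_group_add, 'b::ring_1) morita"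
  assumes
    lmM_add1: "lmM R (a + a') m = lmM R a m + lmM R a' m" and
    lmM_add2: "lmM R a (m + m') = lmM R a m + lmM R a m'" and
    lmM_mult: "lmM R (a * a') m = lmM R a (lmM R a' m)" and
    lmM_one: "lmM R 1 m = m" and
    rmM_add1: "rmM R (m + m') b = rmM R m b + rmM R m' b" and
    rmM_add2: "rmM R m (b + b') = rmM R m b + rmM R m b'" and
    rmM_mult: "rmM R m (b * b') = rmM R (rmM R m b) b'" and
    rmM_one: "rmM R m 1 = m" and
    M_bimod: "lmM R a (rmM R m b) = rmM R (lmM R a m) b" and
    lmN_add1: "lmN R (b + b') n = lmN R b n + lmN R b' n" and
    lmN_add2: "lmN R b (n + n') = lmN R b n + lmN R b n'" and
    lmN_mult: "lmN R (b * b') n = lmN R b (lmN R b' n)" and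
    lmN_one: "lmN R 1 n = n" and
    rmN_add1: "rmN R (n + n') a = rmN R n a + rmN R n' a" and
    rmN_add2: "rmN R n (a + a') = rmN R n a + rmN R n a'" and
    rmN_mult: "rmN R n (a * a') = rmN R (rmN R n a) a'" and
    rmN_one: "rmN R n 1 = n" and
    N_bimod: "lmN R b (rmN R n a) = rmN R (lmN R b n) a" and
    pMN_add1: "pMN R (m + m') n = pMN R m n + pMN R m' n" and
    pMN_add2: "pMN R m (n + n') = pMN R m n + pMN R m n'" and
    pMN_left: "pMN R (lmM R a m) n = a * pMN R m n" and
    pMN_right: "pMN R m (rmN R n a) = pMN R m n * a" and
    pMN_mid: "pMN R (rmM R m b) n = pMN R m (lmN R b n)" and
    pNM_add1: "pNM R (n + n') m = pNM R n m + pNM R n' m" and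
    pNM_add2: "pNM R n (m + m') = pNM R n m + pNM R n m'" and
    pNM_left: "pNM R (lmN R b n) m = b * pNM R n m" and
    pNM_right: "pNM R n (rmM R m b) = pNM R n m * b" and
    pNM_mid: "pNM R (rmN R n a) m = pNM R n (lmM R a m)" and
    assoc_MNM: "lmM R (pMN R m n) m' = rmM R m (pNM R n m')" and
    assoc_NMN: "lmN R (pNM R n m) n' = rmN R n (pMN R m n')" and
    A_2tf: "(2::'a) * a = 0 \<Longrightarrow> a = 0" and
    B_2tf: "(2::'b) * b = 0 \<Longrightarrow> b = 0" and
    M_faithful_left: "(\<forall>m. lmM R a m = 0) \<Longrightarrow> a = 0" and
    M_faithful_right: "(\<forall>m. rmM R m b = 0) \<Longrightarrow> b = 0"

datatype ('a, 'm, 'n, 'b) gmat = Mat (e11: 'a) (e12: 'm) (e21: 'n) (e22: 'b)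

definition mzero :: "('a::zero, 'm::zero, 'n::zero, 'b::zero) gmat" where
  "mzero = Mat 0 0 0 0"

definition mI :: "('a::{zero,one}, 'm::zero, 'n::zero, 'b::{zero,one}) gmat" where
  "mI = Mat 1 0 0 1"

definition P1 :: "('a::{zero,one}, 'm::zero, 'n::zero, 'b::zero) gmat" where
  "P1 = Mat 1 0 0 0"

definition P2 :: "('a::zero, 'm::zero, 'n::zero, 'b::{zero,one}) gmat" where
  "P2 = Mat 0 0 0 1"

definition madd :: "('a::plus, 'm::plus, 'n::plus, 'b::plus) gmat \<Rightarrow> ('a, 'm, 'n, 'b) gmat \<Rightarrow> ('a, 'm, 'n, 'b) gmat" where
  "madd X Y = Mat (e11 X + e11 Y) (e12 X + e12 Y) (e21 X + e21 Y) (e22 X + e22 Y)"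

definition msub :: "('a::minus, 'm::minus, 'n::minus, 'b::minus) gmat \<Rightarrow> ('a, 'm, 'n, 'b) gmat \<Rightarrow> ('a, 'm, 'n, 'b) gmat" where
  "msub X Y = Mat (e11 X - e11 Y) (e12 X - e12 Y) (e21 X - e21 Y) (e22 X - e22 Y)"

definition mmul :: "('a::ring_1, 'm::ab_group_add, 'n::ab_group_add, 'b::ring_1) morita \<Rightarrow>
    ('a, 'm, 'n, 'b) gmat \<Rightarrow> ('a, 'm, 'n, 'b) gmat \<Rightarrow> ('a, 'm, 'n, 'b) gmat" where
  "mmul R X Y = Mat
     (e11 X * e11 Y + pMN R (e12 X) (e21 Y))
     (lmM R (e11 X) (e12 Y) + rmM R (e12 X) (e22 Y))
     (rmN R (e21 X) (e11 Y) + lmN R (e22 X) (e21 Y))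
     (pNM R (e21 X) (e12 Y) + e22 X * e22 Y)"

definition jordan where "jordan R X Y = madd (mmul R X Y) (mmul R Y X)"
definition lie where "lie R X Y = msub (mmul R X Y) (mmul R Y X)"

definition Tmat where
  "Tmat R \<phi> = madd (mmul R (mmul R P1 (\<phi> P1)) P2) (mmul R (mmul R P2 (\<phi> P2)) P1)"

definition varphi where
  "varphi R \<phi> U = madd (msub (\<phi> U) (mmul R (\<phi> mI) U)) (lie R (Tmat R \<phi>) U)"

end

theory Submission
  imports Defs
begin

instantiation gmat :: (ab_group_add, ab_group_add, ab_group_add, ab_group_add) ab_group_add
begin
definition zero_gmat_def: "0 = Mat 0 0 0 0"
definition plus_gmat_def: "X + Y = Mat (e11 X + e11 Y) (e12 X + e12 Y) (e21 X + e21 Y) (e22 X + e22 Y)"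
definition minus_gmat_def: "X - Y = Mat (e11 X - e11 Y) (e12 X - e12 Y) (e21 X - e21 Y) (e22 X - e22 Y)"
definition uminus_gmat_def: "- X = Mat (- e11 X) (- e12 X) (- e21 X) (- e22 X)"
instance by standard (simp_all add: zero_gmat_def plus_gmat_def minus_gmat_def uminus_gmat_def algebra_simps)
end

lemma gsel[simp]:
  "e11 (X + Y) = e11 X + e11 Y" "e12 (X + Y) = e12 X + e12 Y" "e21 (X + Y) = e21 X + e21 Y" "e22 (X + Y) = e22 X + e22 Y"
  "e11 (X - Y) = e11 X - e11 Y" "e12 (X - Y) = e12 X - e12 Y" "e21 (X - Y) = e21 X - e21 Y" "e22 (X - Y) = e22 X - e22 Y"
  "e11 (- X) = - e11 X" "e12 (- X) = - e12 X" "e21 (- X) = - e21 X" "e22 (- X) = - e22 X"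
  "e11 (0::('a::ab_group_add,'b::ab_group_add,'c::ab_group_add,'d::ab_group_add) gmat) = 0"
  "e12 (0::('a::ab_group_add,'b::ab_group_add,'c::ab_group_add,'d::ab_group_add) gmat) = 0"
  "e21 (0::('a::ab_group_add,'b::ab_group_add,'c::ab_group_add,'d::ab_group_add) gmat) = 0"
  "e22 (0::('a::ab_group_add,'b::ab_group_add,'c::ab_group_add,'d::ab_group_add) gmat) = 0"
  by (simp_all add: zero_gmat_def plus_gmat_def minus_gmat_def uminus_gmat_def)

lemma madd_eq: "madd X Y = X + Y" by (simp add: madd_def plus_gmat_def)
lemma msub_eq: "msub X Y = X - Y" by (simp add: msub_def minus_gmat_def)
lemma mzero_eq: "mzero = 0" by (simp add: mzero_def zero_gmat_def)

lemma addfun: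
  fixes f :: "'a::ab_group_add \<Rightarrow> 'b::ab_group_add"
  assumes h: "\<And>x y. f (x + y) = f x + f y"
  shows "f 0 = 0" "f (- x) = - f x" "f (x - y) = f x - f y"
proof -
  have "f (0 + 0) = f 0 + f 0" by (rule h)
  then show z: "f 0 = 0" by simp
  have n: "f (- u) = - f u" for u
  proof -
    have "f (- u + u) = f (- u) + f u" by (rule h)
    with z show ?thesis by (simp add: eq_neg_iff_add_eq_0)
  qed
  then show "f (- x) = - f x" .
  have "f (x + - y) = f x + f (- y)" by (rule h)
  then show "f (x - y) = f x - f y" using n[of y] by simp
qed

context gen_matrix_ring
begin

lemmas lmM1 = addfun[where f="\<lambda>a. lmM R a m", OF lmM_add1] for m
lemmas lmM2 = addfun[where f="lmM R a", OF lmM_add2] for a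
lemmas rmM1 = addfun[where f="\<lambda>m. rmM R m b", OF rmM_add1] for b
lemmas rmM2 = addfun[where f="rmM R m", OF rmM_add2] for m
lemmas lmN1 = addfun[where f="\<lambda>a. lmN R a m", OF lmN_add1] for m
lemmas lmN2 = addfun[where f="lmN R a", OF lmN_add2] for a
lemmas rmN1 = addfun[where f="\<lambda>m. rmN R m b", OF rmN_add1] for b
lemmas rmN2 = addfun[where f="rmN R m", OF rmN_add2] for m
lemmas pMN1 = addfun[where f="\<lambda>m. pMN R m b", OF pMN_add1] for b
lemmas pMN2 = addfun[where f="pMN R m", OF pMN_add2] for m
lemmas pNM1 = addfun[where f="\<lambda>m. pNM R m b", OF pNM_add1] for b
lemmas pNM2 = addfun[where f="pNM R m", OF pNM_add2] for m

lemmas zsimps[simp] = lmM1 lmM2 rmM1 rmM2 lmN1 lmN2 rmN1 rmN2 pMN1 pMN2 pNM1 pNM2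
  lmM_one rmM_one lmN_one rmN_one

lemmas addax = lmM_add1 lmM_add2 rmM_add1 rmM_add2 lmN_add1 lmN_add2 rmN_add1 rmN_add2
  pMN_add1 pMN_add2 pNM_add1 pNM_add2

lemmas assocax = lmM_mult rmM_mult lmN_mult rmN_mult M_bimod N_bimod pMN_left pMN_right pMN_mid
  pNM_left pNM_right pNM_mid assoc_MNM assoc_NMN

lemma mmul_add_left[simp]: "mmul R (X + Y) Z = mmul R X Z + mmul R Y Z"
  by (simp add: mmul_def addax algebra_simps plus_gmat_def)
lemma mmul_add_right[simp]: "mmul R Z (X + Y) = mmul R Z X + mmul R Z Y"
  by (simp add: mmul_def addax algebra_simps plus_gmat_def)
lemma mmul_neg_left[simp]: "mmul R (- X) Z = - mmul R X Z"
  by (simp add: mmul_def algebra_simps uminus_gmat_def)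
lemma mmul_neg_right[simp]: "mmul R Z (- X) = - mmul R Z X"
  by (simp add: mmul_def algebra_simps uminus_gmat_def)
lemma mmul_diff_left[simp]: "mmul R (X - Y) Z = mmul R X Z - mmul R Y Z"
  by (metis diff_conv_add_uminus mmul_add_left mmul_neg_left)
lemma mmul_diff_right[simp]: "mmul R Z (X - Y) = mmul R Z X - mmul R Z Y"
  by (metis diff_conv_add_uminus mmul_add_right mmul_neg_right)
lemma mmul_zero[simp]: "mmul R 0 X = 0" "mmul R X 0 = 0"
  by (simp_all add: mmul_def zero_gmat_def)
lemma mmul_assoc: "mmul R (mmul R X Y) Z = mmul R X (mmul R Y Z)"
  by (simp add: mmul_def addax assocax algebra_simps)

end

lemma jordan_eq: "jordan R X Y = mmul R X Y + mmul R Y X"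
  by (simp add: jordan_def madd_eq)
lemma lie_eq: "lie R X Y = mmul R X Y - mmul R Y X"
  by (simp add: lie_def msub_eq)
lemma varphi_eq: "varphi R \<phi> U = \<phi> U - mmul R (\<phi> mI) U + lie R (Tmat R \<phi>) U"
  by (simp add: varphi_def madd_eq msub_eq)

lemma mI_eq: "(mI :: ('a::ring_1,'m::ab_group_add,'n::ab_group_add,'b::ring_1) gmat) = P1 + P2"
  by (simp add: mI_def P1_def P2_def plus_gmat_def)

theorem lemma2p4:
  fixes R :: "('a::ring_1, 'm::ab_group_add, 'n::ab_group_add, 'b::ring_1) morita"
    and \<phi> :: "('a, 'm, 'n, 'b) gmat \<Rightarrow> ('a, 'm, 'n, 'b) gmat"
  assumes "gen_matrix_ring R"
    and additive: "\<And>X Y. \<phi> (madd X Y) = madd (\<phi> X) (\<phi> Y)"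
    and zp: "\<And>U V. mmul R U V = mzero \<Longrightarrow> mmul R V U = mzero \<Longrightarrow>
               madd (jordan R (\<phi> U) V) (jordan R U (\<phi> V)) = mzero"
  shows "(\<forall>X Y. varphi R \<phi> (madd X Y) = madd (varphi R \<phi> X) (varphi R \<phi> Y))
    \<and> varphi R \<phi> P1 = mzero \<and> varphi R \<phi> P2 = mzero
    \<and> (\<forall>U V. mmul R U V = mzero \<and> mmul R V U = mzero \<longrightarrow>
         madd (jordan R (varphi R \<phi> U) V) (jordan R U (varphi R \<phi> V)) = mzero)"
proof -
  interpret gen_matrix_ring R by fact
  note M = mmul_def
  have ad: "\<phi> (X + Y) = \<phi> X + \<phi> Y" for X Y using additive[of X Y] by (simp add: madd_eq)
  have phin: "\<phi> (- X) = - \<phi> X" "\<phi> (X - Y) = \<phi> X - \<phi> Y" for X Y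
    using addfun[where f=\<phi>, OF ad] by auto
  have zp': "mmul R (\<phi> U) V + mmul R V (\<phi> U) + (mmul R U (\<phi> V) + mmul R (\<phi> V) U) = 0"
    if "mmul R U V = 0" "mmul R V U = 0" for U V
    using zp[of U V] that by (simp add: mzero_eq madd_eq jordan_eq)
  obtain a1 m1 n1 b1 where h1: "\<phi> P1 = Mat a1 m1 n1 b1" by (cases "\<phi> P1")
  obtain a2 m2 n2 b2 where h2: "\<phi> P2 = Mat a2 m2 n2 b2" by (cases "\<phi> P2")
  have E1: "mmul R (\<phi> P1) P2 + mmul R P2 (\<phi> P1) + (mmul R P1 (\<phi> P2) + mmul R (\<phi> P2) P1) = 0"
    by (rule zp') (simp_all add: M P1_def P2_def zero_gmat_def)
  have E1c: "e11 (mmul R (\<phi> P1) P2 + mmul R P2 (\<phi> P1) + (mmul R P1 (\<phi> P2) + mmul R (\<phi> P2) P1)) = 0"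
     "e12 (mmul R (\<phi> P1) P2 + mmul R P2 (\<phi> P1) + (mmul R P1 (\<phi> P2) + mmul R (\<phi> P2) P1)) = 0"
     "e21 (mmul R (\<phi> P1) P2 + mmul R P2 (\<phi> P1) + (mmul R P1 (\<phi> P2) + mmul R (\<phi> P2) P1)) = 0"
     "e22 (mmul R (\<phi> P1) P2 + mmul R P2 (\<phi> P1) + (mmul R P1 (\<phi> P2) + mmul R (\<phi> P2) P1)) = 0"
    using E1 by simp_all
  have "a2 + a2 = 0" using E1c(1) unfolding h1 h2 by (simp add: M P1_def P2_def)
  then have a2: "a2 = 0" using A_2tf[of a2] by (simp add: mult_2)
  have "b1 + b1 = 0" using E1c(4) unfolding h1 h2 by (simp add: M P1_def P2_def)
  then have b1: "b1 = 0" using B_2tf[of b1] by (simp add: mult_2)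
  have m2: "m2 = - m1" using E1c(2) unfolding h1 h2 by (simp add: M P1_def P2_def eq_neg_iff_add_eq_0 add.commute)
  have n2: "n2 = - n1" using E1c(3) unfolding h1 h2 by (simp add: M P1_def P2_def eq_neg_iff_add_eq_0 add.commute)
  have hI: "\<phi> mI = Mat a1 0 0 b2" by (simp only: mI_eq ad h1 h2) (simp add: a2 b1 m2 n2 plus_gmat_def)
  have hT: "Tmat R \<phi> = Mat 0 m1 (- n1) 0"
    unfolding Tmat_def madd_eq h1 h2 by (simp add: a2 b1 m2 n2 M P1_def P2_def plus_gmat_def)
  have part1: "varphi R \<phi> P1 = mzero" "varphi R \<phi> P2 = mzero"
    unfolding varphi_eq lie_eq hI hT h1 h2 by (simp_all add: a2 b1 m2 n2 M P1_def P2_def mzero_def plus_gmat_def minus_gmat_def)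
  have cm: "lmM R a1 m = rmM R m b2" for m
  proof -
    define E :: "('a, 'm, 'n, 'b) gmat" where "E = Mat 0 m 0 0"
    obtain p q r s where hE: "\<phi> E = Mat p q r s" by (cases "\<phi> E")
    have za: "mmul R (\<phi> (P1 + E)) (P2 - E) + mmul R (P2 - E) (\<phi> (P1 + E))
        + (mmul R (P1 + E) (\<phi> (P2 - E)) + mmul R (\<phi> (P2 - E)) (P1 + E)) = 0"
      by (rule zp') (simp_all add: M P1_def P2_def E_def zero_gmat_def plus_gmat_def minus_gmat_def)
    have zE: "mmul R (\<phi> E) E + mmul R E (\<phi> E) + (mmul R E (\<phi> E) + mmul R (\<phi> E) E) = 0"
      by (rule zp') (simp_all add: M E_def zero_gmat_def)
    have key: "- (mmul R (\<phi> P1) E + mmul R E (\<phi> P1)) + (mmul R E (\<phi> P2) + mmul R (\<phi> P2) E)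
       + (mmul R (\<phi> E) P2 + mmul R P2 (\<phi> E)) - (mmul R P1 (\<phi> E) + mmul R (\<phi> E) P1) = 0"
    proof -
      have "- (mmul R (\<phi> P1) E + mmul R E (\<phi> P1)) + (mmul R E (\<phi> P2) + mmul R (\<phi> P2) E)
       + (mmul R (\<phi> E) P2 + mmul R P2 (\<phi> E)) - (mmul R P1 (\<phi> E) + mmul R (\<phi> E) P1) =
       (mmul R (\<phi> (P1 + E)) (P2 - E) + mmul R (P2 - E) (\<phi> (P1 + E))
        + (mmul R (P1 + E) (\<phi> (P2 - E)) + mmul R (\<phi> (P2 - E)) (P1 + E)))
       - (mmul R (\<phi> P1) P2 + mmul R P2 (\<phi> P1) + (mmul R P1 (\<phi> P2) + mmul R (\<phi> P2) P1))
       + (mmul R (\<phi> E) E + mmul R E (\<phi> E) + (mmul R E (\<phi> E) + mmul R (\<phi> E) E))"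
        by (simp add: ad phin algebra_simps)
      also have "\<dots> = 0" using za E1 zE by simp
      finally show ?thesis .
    qed
    have "e12 (- (mmul R (\<phi> P1) E + mmul R E (\<phi> P1)) + (mmul R E (\<phi> P2) + mmul R (\<phi> P2) E)
       + (mmul R (\<phi> E) P2 + mmul R P2 (\<phi> E)) - (mmul R P1 (\<phi> E) + mmul R (\<phi> E) P1)) = 0"
      using key by simp
    then show ?thesis unfolding h1 h2 hE
      by (simp add: M P1_def P2_def E_def a2 b1 m2 n2 algebra_simps)
  qed
  have cn: "rmN R n a1 = lmN R b2 n" for n
  proof -
    define E :: "('a, 'm, 'n, 'b) gmat" where "E = Mat 0 0 n 0"
    obtain p q r s where hE: "\<phi> E = Mat p q r s" by (cases "\<phi> E")
    have za: "mmul R (\<phi> (P1 + E)) (P2 - E) + mmul R (P2 - E) (\<phi> (P1 + E))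
        + (mmul R (P1 + E) (\<phi> (P2 - E)) + mmul R (\<phi> (P2 - E)) (P1 + E)) = 0"
      by (rule zp') (simp_all add: M P1_def P2_def E_def zero_gmat_def plus_gmat_def minus_gmat_def)
    have zE: "mmul R (\<phi> E) E + mmul R E (\<phi> E) + (mmul R E (\<phi> E) + mmul R (\<phi> E) E) = 0"
      by (rule zp') (simp_all add: M E_def zero_gmat_def)
    have key: "- (mmul R (\<phi> P1) E + mmul R E (\<phi> P1)) + (mmul R E (\<phi> P2) + mmul R (\<phi> P2) E)
       + (mmul R (\<phi> E) P2 + mmul R P2 (\<phi> E)) - (mmul R P1 (\<phi> E) + mmul R (\<phi> E) P1) = 0"
    proof -
      have "- (mmul R (\<phi> P1) E + mmul R E (\<phi> P1)) + (mmul R E (\<phi> P2) + mmul R (\<phi> P2) E)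
       + (mmul R (\<phi> E) P2 + mmul R P2 (\<phi> E)) - (mmul R P1 (\<phi> E) + mmul R (\<phi> E) P1) =
       (mmul R (\<phi> (P1 + E)) (P2 - E) + mmul R (P2 - E) (\<phi> (P1 + E))
        + (mmul R (P1 + E) (\<phi> (P2 - E)) + mmul R (\<phi> (P2 - E)) (P1 + E)))
       - (mmul R (\<phi> P1) P2 + mmul R P2 (\<phi> P1) + (mmul R P1 (\<phi> P2) + mmul R (\<phi> P2) P1))
       + (mmul R (\<phi> E) E + mmul R E (\<phi> E) + (mmul R E (\<phi> E) + mmul R (\<phi> E) E))"
        by (simp add: ad phin algebra_simps)
      also have "\<dots> = 0" using za E1 zE by simp
      finally show ?thesis .
    qed
    have "e21 (- (mmul R (\<phi> P1) E + mmul R E (\<phi> P1)) + (mmul R E (\<phi> P2) + mmul R (\<phi> P2) E)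
       + (mmul R (\<phi> E) P2 + mmul R P2 (\<phi> E)) - (mmul R P1 (\<phi> E) + mmul R (\<phi> E) P1)) = 0"
      using key by simp
    then show ?thesis unfolding h1 h2 hE
      by (simp add: M P1_def P2_def E_def a2 b1 m2 n2 algebra_simps)
  qed
  have ca: "a1 * x = x * a1" for x
  proof -
    have "a1 * x - x * a1 = 0"
      by (rule M_faithful_left) (simp add: lmM_mult cm M_bimod)
    then show ?thesis by simp
  qed
  have cb: "b2 * y = y * b2" for y
  proof -
    have "b2 * y - y * b2 = 0"
      by (rule M_faithful_right) (simp add: rmM_mult cm[symmetric] M_bimod)
    then show ?thesis by simp
  qed
  have cZ: "mmul R (\<phi> mI) X = mmul R X (\<phi> mI)" for X
    unfolding hI by (simp add: M ca cb cm cn)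
  let ?Z = "\<phi> mI" and ?T = "Tmat R \<phi>"
  have part0: "\<forall>X Y. varphi R \<phi> (madd X Y) = madd (varphi R \<phi> X) (varphi R \<phi> Y)"
    by (simp add: madd_eq varphi_eq lie_eq ad algebra_simps)
  have part2: "madd (jordan R (varphi R \<phi> U) V) (jordan R U (varphi R \<phi> V)) = mzero"
    if uv: "mmul R U V = 0" and vu: "mmul R V U = 0" for U V
  proof -
    have z: "mmul R (\<phi> U) V + mmul R V (\<phi> U) + (mmul R U (\<phi> V) + mmul R (\<phi> V) U) = 0"
      using zp' uv vu .
    have g1: "mmul R (mmul R ?Z U) V = 0" by (simp add: mmul_assoc uv)
    have g2: "mmul R V (mmul R ?Z U) = 0" by (simp add: cZ mmul_assoc[symmetric] vu)
    have g3: "mmul R U (mmul R ?Z V) = 0" by (simp add: cZ mmul_assoc[symmetric] uv)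
    have g4: "mmul R (mmul R ?Z V) U = 0" by (simp add: mmul_assoc vu)
    have g5: "mmul R (mmul R ?T U) V = 0" by (simp add: mmul_assoc uv)
    have g6: "mmul R V (mmul R U ?T) = 0" by (simp add: mmul_assoc[symmetric] vu)
    have g7: "mmul R U (mmul R V ?T) = 0" by (simp add: mmul_assoc[symmetric] uv)
    have g8: "mmul R (mmul R ?T V) U = 0" by (simp add: mmul_assoc vu)
    have g9: "mmul R (mmul R U ?T) V = mmul R U (mmul R ?T V)" by (rule mmul_assoc)
    have g10: "mmul R V (mmul R ?T U) = mmul R (mmul R V ?T) U" by (rule mmul_assoc[symmetric])
    have "madd (jordan R (varphi R \<phi> U) V) (jordan R U (varphi R \<phi> V)) =
      (mmul R (\<phi> U) V + mmul R V (\<phi> U) + (mmul R U (\<phi> V) + mmul R (\<phi> V) U))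
      - mmul R (mmul R ?Z U) V - mmul R V (mmul R ?Z U) - mmul R U (mmul R ?Z V) - mmul R (mmul R ?Z V) U
      + mmul R (mmul R ?T U) V - mmul R V (mmul R U ?T) - mmul R U (mmul R V ?T) + mmul R (mmul R ?T V) U
      + (mmul R U (mmul R ?T V) - mmul R (mmul R U ?T) V)
      + (mmul R V (mmul R ?T U) - mmul R (mmul R V ?T) U)"
      by (simp add: madd_eq jordan_eq varphi_eq lie_eq algebra_simps)
    also have "\<dots> = 0" by (simp only: z g1 g2 g3 g4 g5 g6 g7 g8 g9 g10) simp
    finally show ?thesis by (simp add: mzero_eq)
  qed
  show ?thesis using part0 part1 part2 by (simp add: mzero_eq)
qed
end
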